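(* Let $\mathcal{F}$ be a finite forest and let $\vec\lambda:V(\mathcal{F})\to\mathbb{Z}_{\ge 0}$ be any labelling of its vertices. Then the bounded degree complex $\mathrm{BD}^{\vec\lambda}(\mathcal{F})$ is vertex decomposable.
   Context: For a finite simple graph $G$ and $\vec\lambda:V(G)\to\mathbb{Z}_{\ge0}$, the bounded degree complex $\mathrm{BD}^{\vec\lambda}(G)$ is the simplicial complex whose simplices are the subsets $\sigma\subseteq E(G)$ such that for every vertex $v\in V(G)$ the number of edges of $\sigma$ incident to $v$ is at most $\vec\lambda(v)$. For a simplicial complex $K$ and a vertex $v$, $\mathrm{lk}(v,K)=\{\tau\in K: v\notin\tau,\ \tau\cup\{v\}\in K\}$ and $\mathrm{del}(v,K)=\{\tau\in K: v\notin\tau\}$. A simplicial complex $K$ is vertex decomposable if $K$ is a simplex (the set of all subsets of a finite set, including $\{\emptyset\}$), or $K$ contains a vertex $v$ such that (i) both $\mathrm{lk}(v,K)$ and $\mathrm{del}(v,K)$ are vertex decomposable, and (ii) every facet (maximal simplex) of $\mathrm{del}(v,K)$ is a facet of $K$. *)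

theory Defs
  imports Main
begin

definition simple_graph :: "'a set \<Rightarrow> 'a set set \<Rightarrow> bool" where
  "simple_graph V E \<longleftrightarrow> finite V \<and> (\<forall>e\<in>E. e \<subseteq> V \<and> card e = 2)"

definition is_cycle :: "'a set set \<Rightarrow> 'a list \<Rightarrow> bool" where
  "is_cycle E cs \<longleftrightarrow> length cs \<ge> 3 \<and> distinct cs \<and>
     (\<forall>i < length cs. {cs ! i, cs ! ((i + 1) mod length cs)} \<in> E)"

definition forest :: "'a set \<Rightarrow> 'a set set \<Rightarrow> bool" where
  "forest V E \<longleftrightarrow> simple_graph V E \<and> (\<nexists>cs. is_cycle E cs)"

definition BD :: "'a set \<Rightarrow> 'a set set \<Rightarrow> ('a \<Rightarrow> nat) \<Rightarrow> 'a set set set" where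
  "BD V E lam = {\<sigma>. \<sigma> \<subseteq> E \<and> (\<forall>v\<in>V. card {e\<in>\<sigma>. v \<in> e} \<le> lam v)}"

definition lk :: "'b \<Rightarrow> 'b set set \<Rightarrow> 'b set set" where
  "lk v K = {\<tau>\<in>K. v \<notin> \<tau> \<and> insert v \<tau> \<in> K}"

definition del :: "'b \<Rightarrow> 'b set set \<Rightarrow> 'b set set" where
  "del v K = {\<tau>\<in>K. v \<notin> \<tau>}"

definition facet :: "'b set \<Rightarrow> 'b set set \<Rightarrow> bool" where
  "facet \<sigma> K \<longleftrightarrow> \<sigma> \<in> K \<and> (\<forall>\<tau>\<in>K. \<sigma> \<subseteq> \<tau> \<longrightarrow> \<tau> = \<sigma>)"

definition is_simplex :: "'b set set \<Rightarrow> bool" where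
  "is_simplex K \<longleftrightarrow> (\<exists>S. finite S \<and> K = Pow S)"

inductive vertex_decomposable :: "'b set set \<Rightarrow> bool" where
  simplex: "is_simplex K \<Longrightarrow> vertex_decomposable K"
| decomp: "\<lbrakk> {v} \<in> K; vertex_decomposable (lk v K); vertex_decomposable (del v K);
             \<forall>\<sigma>. facet \<sigma> (del v K) \<longrightarrow> facet \<sigma> K \<rbrakk> \<Longrightarrow> vertex_decomposable K"

end

theory Submission
  imports Defs
begin



definition cone :: "'b set set \<Rightarrow> 'b \<Rightarrow> 'b set set" where
  "cone K e = {\<tau>. \<tau> - {e} \<in> K}"

lemma cone_vd:
  "vertex_decomposable K \<Longrightarrow> \<forall>\<tau>\<in>K. e \<notin> \<tau> \<Longrightarrow> vertex_decomposable (cone K e)"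
proof (induction rule: vertex_decomposable.induct)
  case (simplex K)
  then obtain S where S: "finite S" "K = Pow S" by (auto simp: is_simplex_def)
  then have "cone K e = Pow (insert e S)" by (auto simp: cone_def)
  moreover have "is_simplex (Pow (insert e S))" using S(1) unfolding is_simplex_def by blast
  ultimately show ?case by (simp add: vertex_decomposable.simplex)
next
  case (decomp v K)
  have ve: "v \<noteq> e" using decomp.prems decomp.hyps(1) by auto
  have lk: "lk v (cone K e) = cone (lk v K) e"
    using ve unfolding lk_def cone_def by (auto simp: insert_Diff_if)
  have dl: "del v (cone K e) = cone (del v K) e"
    using ve unfolding del_def cone_def by auto
  have v: "{v} \<in> cone K e" using decomp.hyps(1) ve by (simp add: cone_def)
  have ih1: "vertex_decomposable (cone (lk v K) e)"
    using decomp.IH(1) decomp.prems unfolding lk_def by blast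
  have ih2: "vertex_decomposable (cone (del v K) e)"
    using decomp.IH(2) decomp.prems unfolding del_def by blast
  have fc: "facet \<sigma> (cone K e)" if f: "facet \<sigma> (cone (del v K) e)" for \<sigma>
  proof -
    have s1: "\<sigma> - {e} \<in> del v K" using f by (simp add: facet_def cone_def)
    have fmax: "\<And>\<tau>. \<tau> \<in> cone (del v K) e \<Longrightarrow> \<sigma> \<subseteq> \<tau> \<Longrightarrow> \<tau> = \<sigma>"
      using f unfolding facet_def by blast
    have eS: "e \<in> \<sigma>"
    proof (rule ccontr)
      assume "e \<notin> \<sigma>"
      have "insert e \<sigma> \<in> cone (del v K) e" using s1 by (simp add: cone_def)
      then have "insert e \<sigma> = \<sigma>" using fmax by blast
      then show False using \<open>e \<notin> \<sigma>\<close> by blast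
    qed
    have "facet (\<sigma> - {e}) (del v K)"
      unfolding facet_def
    proof (intro conjI ballI impI)
      show "\<sigma> - {e} \<in> del v K" by fact
      fix \<tau> assume t: "\<tau> \<in> del v K" "\<sigma> - {e} \<subseteq> \<tau>"
      have et: "e \<notin> \<tau>" using t(1) decomp.prems by (auto simp: del_def)
      have "insert e \<tau> \<in> cone (del v K) e" using t(1) et by (simp add: cone_def)
      moreover have "\<sigma> \<subseteq> insert e \<tau>" using t(2) by blast
      ultimately have "insert e \<tau> = \<sigma>" by (rule fmax)
      then show "\<tau> = \<sigma> - {e}" using et by blast
    qed
    then have fk: "facet (\<sigma> - {e}) K" using decomp.hyps(4) by blast
    show ?thesis unfolding facet_def
    proof (intro conjI ballI impI)
      show "\<sigma> \<in> cone K e" using fk by (simp add: facet_def cone_def)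
      fix \<tau> assume t: "\<tau> \<in> cone K e" "\<sigma> \<subseteq> \<tau>"
      have fk2: "\<And>\<rho>. \<rho> \<in> K \<Longrightarrow> \<sigma> - {e} \<subseteq> \<rho> \<Longrightarrow> \<rho> = \<sigma> - {e}"
        using fk unfolding facet_def by blast
      have "\<tau> - {e} \<in> K" using t(1) by (simp add: cone_def)
      moreover have "\<sigma> - {e} \<subseteq> \<tau> - {e}" using t(2) by blast
      ultimately have "\<tau> - {e} = \<sigma> - {e}" by (rule fk2)
      then show "\<tau> = \<sigma>" using eS t(2) by blast
    qed
  qed
  show ?case
  proof (rule vertex_decomposable.decomp[OF v])
    show "vertex_decomposable (lk v (cone K e))" using ih1 lk by simp
    show "vertex_decomposable (del v (cone K e))" using ih2 dl by simp
    show "\<forall>\<sigma>. facet \<sigma> (del v (cone K e)) \<longrightarrow> facet \<sigma> (cone K e)" using fc dl by simp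
  qed
qed



definition gpath :: "'a set set \<Rightarrow> 'a list \<Rightarrow> bool" where
  "gpath E ps \<longleftrightarrow> distinct ps \<and> (\<forall>i. Suc i < length ps \<longrightarrow> {ps!i, ps!Suc i} \<in> E)"

lemma path_cycle:
  assumes "gpath E ps" "length ps \<ge> 3" "{ps ! (length ps - 1), ps ! 0} \<in> E"
  shows "is_cycle E ps"
  unfolding is_cycle_def
proof (intro conjI allI impI)
  show "3 \<le> length ps" "distinct ps" using assms by (auto simp: gpath_def)
  fix i assume i: "i < length ps"
  show "{ps ! i, ps ! ((i + 1) mod length ps)} \<in> E"
  proof (cases "Suc i < length ps")
    case True then show ?thesis using assms(1) by (simp add: gpath_def)
  next
    case False
    then have "Suc i = length ps" using i by linarith
    then have "i = length ps - 1" "(i+1) mod length ps = 0" by simp_all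
    then show ?thesis using assms(3) by simp
  qed
qed

lemma gpath_take: "gpath E ps \<Longrightarrow> gpath E (take k ps)"
  by (auto simp: gpath_def)

lemma gpath_drop: "gpath E ps \<Longrightarrow> gpath E (drop k ps)"
  by (auto simp: gpath_def add.commute)

lemma gpath_Cons: "gpath E ps \<Longrightarrow> ps \<noteq> [] \<Longrightarrow> y \<notin> set ps \<Longrightarrow> {y, hd ps} \<in> E \<Longrightarrow> gpath E (y#ps)"
  unfolding gpath_def
proof (intro conjI allI impI)
  fix i assume a: "distinct ps \<and> (\<forall>i. Suc i < length ps \<longrightarrow> {ps ! i, ps ! Suc i} \<in> E)"
    "ps \<noteq> []" "y \<notin> set ps" "{y, hd ps} \<in> E" and i: "Suc i < length (y # ps)"
  show "{(y # ps) ! i, (y # ps) ! Suc i} \<in> E"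
    using a i by (cases i) (auto simp: hd_conv_nth)
qed auto

lemma forest_sub: "forest V E \<Longrightarrow> E' \<subseteq> E \<Longrightarrow> forest V E'"
  unfolding forest_def simple_graph_def is_cycle_def by blast

lemma two_elem: "card f = 2 \<Longrightarrow> w \<in> f \<Longrightarrow> \<exists>y. f = {w,y} \<and> y \<noteq> w"
  by (auto simp: card_2_iff)



lemma claimA_lem:
  assumes nocyc: "\<And>cs. \<not> is_cycle E cs" and sg: "\<forall>e\<in>E. e \<subseteq> V \<and> card e = 2"
    and gp: "gpath E qs" and qV: "set qs \<subseteq> V" and n2: "length qs \<ge> 2"
    and mx: "\<And>rs. gpath E rs \<Longrightarrow> set rs \<subseteq> V \<Longrightarrow> length rs \<le> length qs"
    and g: "g \<in> E" "qs!0 \<in> g"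
  shows "g = {qs!0, qs!1}"
proof -
  have c2: "card g = 2" using sg g by blast
  obtain y where y: "g = {qs!0, y}" "y \<noteq> qs!0" using two_elem[OF c2 g(2)] by blast
  have yV: "y \<in> V" using sg g y by blast
  have dq: "distinct qs" using gp by (simp add: gpath_def)
  show ?thesis
  proof (cases "y \<in> set qs")
    case False
    have ne: "qs \<noteq> []" using n2 by auto
    have "{y, hd qs} \<in> E" using g y ne by (simp add: hd_conv_nth insert_commute)
    then have "gpath E (y#qs)" using gpath_Cons[OF gp ne False] by blast
    moreover have "set (y#qs) \<subseteq> V" using qV yV by simp
    ultimately have "length (y#qs) \<le> length qs" by (rule mx)
    then show ?thesis by simp
  next
    case True
    then obtain j where j: "j < length qs" "qs!j = y" by (auto simp: in_set_conv_nth)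
    have j0: "j \<noteq> 0" using j y by (metis)
    show ?thesis
    proof (cases "j = 1")
      case True then show ?thesis using j y by simp
    next
      case False
      have "is_cycle E (take (j+1) qs)"
      proof (rule path_cycle)
        show "gpath E (take (j + 1) qs)" using gp by (rule gpath_take)
        have "length (take (j + 1) qs) = j + 1" using j by simp
        then show "3 \<le> length (take (j + 1) qs)" using j0 False by simp
        have "take (j + 1) qs ! (length (take (j + 1) qs) - 1) = y" using j by simp
        moreover have "take (j + 1) qs ! 0 = qs ! 0" by simp
        ultimately show "{take (j + 1) qs ! (length (take (j + 1) qs) - 1), take (j + 1) qs ! 0} \<in> E"
          using g y by (simp add: insert_commute)
      qed
      then show ?thesis using nocyc by blast
    qed
  qed
qed

lemma forest_struct:
  assumes F: "forest V E" and ne: "E \<noteq> {}"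
  shows "\<exists>w u x. {w,u} \<in> E \<and> w \<noteq> u \<and> (\<forall>g\<in>E. u \<in> g \<longrightarrow> g = {w,u}) \<and>
           (\<forall>y. {w,y} \<in> E \<longrightarrow> y \<noteq> x \<longrightarrow> (\<forall>g\<in>E. y \<in> g \<longrightarrow> g = {w,y}))"
proof -
  have sg: "finite V" "\<forall>e\<in>E. e \<subseteq> V \<and> card e = 2" using F by (auto simp: forest_def simple_graph_def)
  have nocyc: "\<not> is_cycle E cs" for cs using F by (auto simp: forest_def)
  define P where "P ps \<longleftrightarrow> gpath E ps \<and> set ps \<subseteq> V" for ps
  obtain e0 where e0: "e0 \<in> E" using ne by blast
  then have "card e0 = 2" using sg by blast
  then obtain a b where ab: "e0 = {a,b}" "a \<noteq> b" by (auto simp: card_2_iff)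
  have abV: "a \<in> V" "b \<in> V" using ab e0 sg by auto
  have "gpath E [a,b]" unfolding gpath_def using ab e0 by (auto simp: less_Suc_eq)
  then have Pab: "P [a,b]" using abV by (simp add: P_def)
  have bnd: "length ps \<le> card V" if "P ps" for ps
  proof -
    have "length ps = card (set ps)" using that by (simp add: P_def gpath_def distinct_card)
    also have "\<dots> \<le> card V" using that sg(1) by (intro card_mono) (auto simp: P_def)
    finally show ?thesis .
  qed
  have "\<exists>n. (\<exists>ps. P ps \<and> length ps = n) \<and> (\<forall>m. (\<exists>ps. P ps \<and> length ps = m) \<longrightarrow> m \<le> n)"
    by (rule Nat.ex_has_greatest_nat[where k=2 and b="card V"]) (use Pab bnd in auto)
  then obtain ps where ps: "P ps" and mx0: "\<And>qs. P qs \<Longrightarrow> length qs \<le> length ps"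
    by blast
  have n2: "length ps \<ge> 2" using mx0[OF Pab] by simp
  have gp: "gpath E ps" "distinct ps" "set ps \<subseteq> V" using ps by (auto simp: P_def gpath_def)
  have mx: "\<And>rs. gpath E rs \<Longrightarrow> set rs \<subseteq> V \<Longrightarrow> length rs \<le> length ps"
    using mx0 by (simp add: P_def)
  define w u x where "w = ps!1" and "u = ps!0" and "x = ps!2"
  have "{ps!0, ps!Suc 0} \<in> E" using gp(1) n2 unfolding gpath_def by simp
  then have wu: "{w,u} \<in> E" unfolding w_def u_def by (simp add: insert_commute)
  have l10: "1 < length ps" "0 < length ps" using n2 by auto
  have wneu: "w \<noteq> u" unfolding w_def u_def using nth_eq_iff_index_eq[OF gp(2) l10] by simp
  have leafu: "\<forall>g\<in>E. u \<in> g \<longrightarrow> g = {w,u}"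
  proof (intro ballI impI)
    fix g assume "g \<in> E" "u \<in> g"
    then have "g = {ps!0, ps!1}" using claimA_lem[OF nocyc sg(2) gp(1) gp(3) n2 mx] unfolding u_def by blast
    then show "g = {w,u}" unfolding w_def u_def by (simp add: insert_commute)
  qed
  have nb: "\<forall>g\<in>E. y \<in> g \<longrightarrow> g = {w,y}" if y: "{w,y} \<in> E" "y \<noteq> x" for y
  proof (cases "y \<in> set ps")
    case True
    then obtain j where j: "j < length ps" "ps!j = y" by (auto simp: in_set_conv_nth)
    have "card {w,y} = 2" using y sg by blast
    then have yw: "y \<noteq> w" by (cases "y = w") simp_all
    show ?thesis
    proof (cases "j \<le> 2")
      case True
      have "j \<noteq> 1" using j yw unfolding w_def by metis
      moreover have "j \<noteq> 2" using j y(2) unfolding x_def by metis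
      ultimately have "j = 0" using True by linarith
      then show ?thesis using j leafu unfolding u_def by simp
    next
      case False
      let ?cs = "drop 1 (take (j+1) ps)"
      have "is_cycle E ?cs"
      proof (rule path_cycle)
        show "gpath E ?cs" using gp by (intro gpath_drop gpath_take)
        have l: "length ?cs = j" using j by simp
        then show "3 \<le> length ?cs" using False by simp
        have "?cs ! (length ?cs - 1) = y" using l j False by simp
        moreover have "?cs ! 0 = w" using j False unfolding w_def by simp
        ultimately show "{?cs ! (length ?cs - 1), ?cs ! 0} \<in> E"
          using y by (simp add: insert_commute)
      qed
      then show ?thesis using nocyc by blast
    qed
  next
    case False
    let ?rs = "y # tl ps"
    have tl1: "tl ps \<noteq> []" using n2 by (simp flip: length_greater_0_conv)
    have "hd (tl ps) = tl ps ! 0" using hd_conv_nth[OF tl1] .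
    also have "\<dots> = ps ! 1" using n2 by (simp add: nth_tl)
    finally have tl: "tl ps \<noteq> []" "hd (tl ps) = w" using tl1 unfolding w_def by auto
    have gt: "gpath E (tl ps)" using gpath_drop[OF gp(1), of 1] by (simp add: drop_Suc)
    have stl: "set (tl ps) \<subseteq> set ps" by (cases ps) auto
    have ynt: "y \<notin> set (tl ps)" using False stl by blast
    have "{y, hd (tl ps)} \<in> E" using y tl by (simp add: insert_commute)
    then have gr: "gpath E ?rs" using gpath_Cons[OF gt tl(1) ynt] by blast
    have yV: "y \<in> V" using y sg by blast
    have rV: "set ?rs \<subseteq> V" using gp(3) yV stl by auto
    have ln: "length ?rs = length ps" using n2 by simp
    have mx': "\<And>rs. gpath E rs \<Longrightarrow> set rs \<subseteq> V \<Longrightarrow> length rs \<le> length ?rs"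
      using mx ln by simp
    have n2': "length ?rs \<ge> 2" using ln n2 by simp
    have r1: "?rs ! 1 = w" using tl by (simp add: hd_conv_nth)
    show ?thesis
    proof (intro ballI impI)
      fix g assume "g \<in> E" "y \<in> g"
      then have "g = {?rs!0, ?rs!1}" using claimA_lem[OF nocyc sg(2) gr rV n2' mx'] by simp
      then show "g = {w,y}" using r1 by (simp add: insert_commute)
    qed
  qed
  show ?thesis using wu wneu leafu nb by blast
qed



lemma finE: "simple_graph V E \<Longrightarrow> finite E"
  unfolding simple_graph_def by (meson Pow_iff finite_Pow_iff finite_subset subsetI)

lemma BD_sub: "\<sigma> \<in> BD V E lam \<Longrightarrow> \<sigma> \<subseteq> E"
  by (simp add: BD_def)

lemma card_filter_mono: "finite \<tau> \<Longrightarrow> \<sigma> \<subseteq> \<tau> \<Longrightarrow> card {f\<in>\<sigma>. v \<in> f} \<le> card {f\<in>\<tau>. v \<in> f}"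
  by (rule card_mono) auto

lemma card_filter_insert:
  assumes "finite \<sigma>" "e \<notin> \<sigma>"
  shows "card {f\<in>insert e \<sigma>. v \<in> f} = (if v \<in> e then Suc (card {f\<in>\<sigma>. v \<in> f}) else card {f\<in>\<sigma>. v \<in> f})"
proof (cases "v \<in> e")
  case True
  then have "{f\<in>insert e \<sigma>. v \<in> f} = insert e {f\<in>\<sigma>. v \<in> f}" by auto
  then show ?thesis using assms True by simp
next
  case False
  then have "{f\<in>insert e \<sigma>. v \<in> f} = {f\<in>\<sigma>. v \<in> f}" by auto
  then show ?thesis using False by simp
qed

lemma shed:
  assumes sg: "simple_graph V E" and e: "e \<in> E" and pos: "\<forall>v\<in>e. lam v \<ge> 1"
    and vd1: "vertex_decomposable (BD V (E-{e}) lam)"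
    and vd2: "vertex_decomposable (BD V (E-{e}) (\<lambda>v. if v \<in> e then lam v - 1 else lam v))"
    and fac: "\<forall>\<sigma>. facet \<sigma> (BD V (E-{e}) lam) \<longrightarrow> (\<exists>v\<in>e. lam v \<le> card {f\<in>\<sigma>. v \<in> f})"
  shows "vertex_decomposable (BD V E lam)"
proof -
  have fE: "finite E" using sg by (rule finE)
  have eV: "e \<subseteq> V" using sg e by (auto simp: simple_graph_def)
  define K where "K = BD V E lam"
  define lam' where "lam' = (\<lambda>v. if v \<in> e then lam v - 1 else lam v)"
  have se: "{e} \<in> K"
    unfolding K_def BD_def
  proof (intro CollectI conjI ballI)
    show "{e} \<subseteq> E" using e by simp
    fix v assume "v \<in> V"
    show "card {f\<in>{e}. v \<in> f} \<le> lam v"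
    proof (cases "v \<in> e")
      case True
      then have "{f\<in>{e}. v \<in> f} = {e}" by auto
      then show ?thesis using pos True by (simp only:) simp
    next
      case False
      then have "{f\<in>{e}. v \<in> f} = {}" by auto
      then show ?thesis by (simp only:) simp
    qed
  qed
  have lk: "lk e K = BD V (E-{e}) lam'"
  proof (intro equalityI subsetI)
    fix \<tau> assume t: "\<tau> \<in> lk e K"
    then have t1: "insert e \<tau> \<in> K" "e \<notin> \<tau>" by (auto simp: lk_def)
    then have tE: "\<tau> \<subseteq> E - {e}" by (auto simp: K_def BD_def)
    then have ft: "finite \<tau>" using fE finite_subset by blast
    show "\<tau> \<in> BD V (E-{e}) lam'"
      unfolding BD_def
    proof (intro CollectI conjI ballI)
      show "\<tau> \<subseteq> E - {e}" by fact
      fix v assume v: "v \<in> V"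
      have "card {f\<in>insert e \<tau>. v \<in> f} \<le> lam v" using t1(1) v by (auto simp: K_def BD_def)
      then show "card {f\<in>\<tau>. v \<in> f} \<le> lam' v"
        unfolding lam'_def using card_filter_insert[OF ft t1(2), of v] by (auto split: if_splits)
    qed
  next
    fix \<tau> assume t: "\<tau> \<in> BD V (E-{e}) lam'"
    then have tE: "\<tau> \<subseteq> E - {e}" by (simp add: BD_def)
    then have ft: "finite \<tau>" using fE finite_subset by blast
    have et: "e \<notin> \<tau>" using tE by blast
    have ins: "insert e \<tau> \<in> K"
      unfolding K_def BD_def
    proof (intro CollectI conjI ballI)
      show "insert e \<tau> \<subseteq> E" using tE e by blast
      fix v assume v: "v \<in> V"
      have "card {f\<in>\<tau>. v \<in> f} \<le> lam' v" using t v by (simp add: BD_def)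
      then show "card {f\<in>insert e \<tau>. v \<in> f} \<le> lam v"
        unfolding lam'_def using card_filter_insert[OF ft et, of v] pos by (auto split: if_splits)
    qed
    have "\<tau> \<in> K"
      unfolding K_def BD_def
    proof (intro CollectI conjI ballI)
      show "\<tau> \<subseteq> E" using tE by blast
      fix v assume v: "v \<in> V"
      have "card {f\<in>\<tau>. v \<in> f} \<le> card {f\<in>insert e \<tau>. v \<in> f}"
        by (rule card_filter_mono) (use ft in auto)
      also have "\<dots> \<le> lam v" using ins v by (simp add: K_def BD_def)
      finally show "card {f\<in>\<tau>. v \<in> f} \<le> lam v" .
    qed
    then show "\<tau> \<in> lk e K" using ins et by (simp add: lk_def)
  qed
  have dl: "del e K = BD V (E-{e}) lam"
    unfolding K_def del_def BD_def by auto
  have fc: "facet \<sigma> K" if f: "facet \<sigma> (del e K)" for \<sigma>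
  proof -
    have f': "facet \<sigma> (BD V (E-{e}) lam)" using f dl by simp
    then obtain v where v: "v \<in> e" "lam v \<le> card {f\<in>\<sigma>. v \<in> f}" using fac by blast
    have sd: "\<sigma> \<in> del e K" using f by (simp add: facet_def)
    have fmax: "\<And>\<tau>. \<tau> \<in> del e K \<Longrightarrow> \<sigma> \<subseteq> \<tau> \<Longrightarrow> \<tau> = \<sigma>" using f unfolding facet_def by blast
    have sK: "\<sigma> \<in> K" "e \<notin> \<sigma>" using sd by (auto simp: del_def)
    show ?thesis
      unfolding facet_def
    proof (intro conjI ballI impI)
      show "\<sigma> \<in> K" by fact
      fix \<tau> assume t: "\<tau> \<in> K" "\<sigma> \<subseteq> \<tau>"
      have ft: "finite \<tau>" using t(1) fE finite_subset by (auto simp: K_def BD_def)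
      have fs: "finite \<sigma>" using t(2) ft finite_subset by blast
      show "\<tau> = \<sigma>"
      proof (cases "e \<in> \<tau>")
        case True
        have "Suc (card {f\<in>\<sigma>. v \<in> f}) = card {f\<in>insert e \<sigma>. v \<in> f}"
          using card_filter_insert[OF fs sK(2), of v] v(1) by simp
        also have "\<dots> \<le> card {f\<in>\<tau>. v \<in> f}"
          by (rule card_filter_mono) (use ft t True in auto)
        also have "\<dots> \<le> lam v" using t(1) v(1) eV by (auto simp: K_def BD_def)
        finally show ?thesis using v(2) by simp
      next
        case False
        then have "\<tau> \<in> del e K" using t(1) by (simp add: del_def)
        then show ?thesis using fmax t(2) by blast
      qed
    qed
  qed
  have "vertex_decomposable K"
  proof (rule vertex_decomposable.decomp[OF se])
    show "vertex_decomposable (lk e K)" using lk vd2 lam'_def by simp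
    show "vertex_decomposable (del e K)" using dl vd1 by simp
    show "\<forall>\<sigma>. facet \<sigma> (del e K) \<longrightarrow> facet \<sigma> K" using fc by blast
  qed
  then show ?thesis by (simp add: K_def)
qed




lemma leaf_in_facet:
  assumes f: "facet \<sigma> (BD V E' lam)" and E'E: "E' \<subseteq> E" and fE: "finite E"
    and fin: "f \<in> E'" and fw: "f = {w,y}" and yw: "y \<noteq> w"
    and leaf: "\<forall>g\<in>E. y \<in> g \<longrightarrow> g = f" and ly: "lam y \<ge> 1"
    and lw: "card {g\<in>\<sigma>. w \<in> g} < lam w"
  shows "f \<in> \<sigma>"
proof (rule ccontr)
  assume nf: "f \<notin> \<sigma>"
  have sB: "\<sigma> \<in> BD V E' lam" using f by (simp add: facet_def)
  have fmax: "\<And>\<tau>. \<tau> \<in> BD V E' lam \<Longrightarrow> \<sigma> \<subseteq> \<tau> \<Longrightarrow> \<tau> = \<sigma>" using f unfolding facet_def by blast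
  have sE: "\<sigma> \<subseteq> E'" using sB by (simp add: BD_def)
  have fs: "finite \<sigma>" using sE E'E fE by (meson finite_subset subset_trans)
  have "insert f \<sigma> \<in> BD V E' lam"
    unfolding BD_def
  proof (intro CollectI conjI ballI)
    show "insert f \<sigma> \<subseteq> E'" using sE fin by blast
    fix v assume v: "v \<in> V"
    have c: "card {g\<in>insert f \<sigma>. v \<in> g} = (if v \<in> f then Suc (card {g\<in>\<sigma>. v \<in> g}) else card {g\<in>\<sigma>. v \<in> g})"
      by (rule card_filter_insert[OF fs nf])
    show "card {g\<in>insert f \<sigma>. v \<in> g} \<le> lam v"
    proof (cases "v \<in> f")
      case True
      then consider "v = w" | "v = y" using fw by auto
      then show ?thesis
      proof cases
        case 1 then show ?thesis using c lw True by simp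
      next
        case 2
        have "y \<notin> g" if "g \<in> \<sigma>" for g
        proof
          assume "y \<in> g"
          moreover have "g \<in> E" using that sE E'E by blast
          ultimately have "g = f" using leaf by blast
          then show False using that nf by simp
        qed
        then have "{g\<in>\<sigma>. y \<in> g} = {}" by blast
        then have "card {g\<in>\<sigma>. y \<in> g} = 0" by (simp only:) simp
        then show ?thesis using c 2 True ly by simp
      qed
    next
      case False
      then show ?thesis using c sB v by (simp add: BD_def)
    qed
  qed
  then have "insert f \<sigma> = \<sigma>" using fmax by blast
  then show False using nf by blast
qed

lemma main: "forest V E \<Longrightarrow> vertex_decomposable (BD V E lam)"
proof (induction "card E" arbitrary: E lam rule: less_induct)
  case less
  have F: "forest V E" by fact
  have sg: "simple_graph V E" using F by (simp add: forest_def)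
  have fE: "finite E" using sg by (rule finE)
  have sg2: "\<forall>e\<in>E. e \<subseteq> V \<and> card e = 2" using sg by (simp add: simple_graph_def)
  have IH: "vertex_decomposable (BD V (E-{e}) lam')" if "e \<in> E" for e lam'
  proof -
    have "card (E - {e}) < card E" using fE that by (rule card_Diff1_less)
    moreover have "forest V (E - {e})" using F by (rule forest_sub) blast
    ultimately show ?thesis using less.hyps by blast
  qed
  show ?case
  proof (cases "\<exists>e\<in>E. \<exists>v\<in>e. lam v = 0")
    case True
    then obtain e v where ev: "e \<in> E" "v \<in> e" "lam v = 0" by blast
    have vV: "v \<in> V" using ev sg2 by blast
    have "BD V E lam = BD V (E-{e}) lam"
    proof (intro equalityI subsetI)
      fix \<sigma> assume s: "\<sigma> \<in> BD V E lam"
      have fs: "finite \<sigma>" using finite_subset[OF _ fE] s by (simp add: BD_def)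
      have "card {f\<in>\<sigma>. v \<in> f} \<le> lam v" using s vV by (simp add: BD_def)
      then have "card {f\<in>\<sigma>. v \<in> f} \<le> 0" using ev(3) by simp
      then have "{f\<in>\<sigma>. v \<in> f} = {}" using fs by simp
      then have "e \<notin> \<sigma>" using ev(2) by blast
      then show "\<sigma> \<in> BD V (E-{e}) lam" using s by (auto simp: BD_def)
    next
      fix \<sigma> assume "\<sigma> \<in> BD V (E-{e}) lam" then show "\<sigma> \<in> BD V E lam" by (auto simp: BD_def)
    qed
    then show ?thesis using IH[OF ev(1)] by simp
  next
    case False
    have pos: "lam v \<ge> 1" if "e \<in> E" "v \<in> e" for e v
    proof (rule ccontr)
      assume "\<not> 1 \<le> lam v"
      then have "lam v = 0" by simp
      then show False using False that by blast
    qed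
    show ?thesis
    proof (cases "E = {}")
      case True
      have "BD V E lam = Pow {}"
      proof (intro equalityI subsetI)
        fix \<sigma> assume "\<sigma> \<in> BD V E lam"
        then show "\<sigma> \<in> Pow {}" using True by (simp add: BD_def)
      next
        fix \<sigma> :: "'a set set" assume "\<sigma> \<in> Pow {}"
        then have "\<sigma> = {}" by simp
        then show "\<sigma> \<in> BD V E lam" by (simp add: BD_def)
      qed
      moreover have "is_simplex (Pow ({} :: 'a set set))" unfolding is_simplex_def by (intro exI[of _ "{}"]) simp
      ultimately show ?thesis by (simp add: vertex_decomposable.simplex)
    next
      case False
      obtain w u x where str: "{w,u} \<in> E" "w \<noteq> u" "\<forall>g\<in>E. u \<in> g \<longrightarrow> g = {w,u}"
        "\<forall>y. {w,y} \<in> E \<longrightarrow> y \<noteq> x \<longrightarrow> (\<forall>g\<in>E. y \<in> g \<longrightarrow> g = {w,y})"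
        using forest_struct[OF F False] by (elim exE conjE) (rule that; assumption)
      define eu where "eu = {w,u}"
      define A where "A = {f\<in>E. w \<in> f}"
      define B where "B = A - {{w,x}}"
      have fA: "finite A" "finite B" using fE by (auto simp: A_def B_def)
      have euE: "eu \<in> E" using str(1) by (simp add: eu_def)
      have posu: "\<forall>v\<in>eu. lam v \<ge> 1" using pos[OF euE] by blast
      have leafB: "\<exists>y. f = {w,y} \<and> y \<noteq> w \<and> (\<forall>g\<in>E. y \<in> g \<longrightarrow> g = f)" if fB: "f \<in> B" for f
      proof -
        have fE': "f \<in> E" "w \<in> f" "f \<noteq> {w,x}" using fB by (auto simp: A_def B_def)
        have "card f = 2" using sg2 fE' by blast
        then have "\<exists>y. f = {w,y} \<and> y \<noteq> w" using fE'(2) by (rule two_elem)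
        then obtain y where y: "f = {w,y}" "y \<noteq> w" by (elim exE conjE) (rule that; assumption)
        have yx: "y \<noteq> x"
        proof
          assume "y = x"
          then have "f = {w,x}" using y(1) by simp
          then show False using fE'(3) by simp
        qed
        have wyE: "{w,y} \<in> E" using fE'(1) y(1) by simp
        have "\<forall>g\<in>E. y \<in> g \<longrightarrow> g = {w,y}" using mp[OF mp[OF spec[OF str(4), of y] wyE] yx] .
        then have h: "\<forall>g\<in>E. y \<in> g \<longrightarrow> g = f" unfolding y(1) .
        show ?thesis by (intro exI[of _ y] conjI y(1) y(2) h)
      qed
      show ?thesis
      proof (cases "card A \<le> lam w")
        case True
        have eq: "BD V E lam = cone (BD V (E-{eu}) lam) eu"
        proof (intro equalityI subsetI)
          fix \<tau> assume t: "\<tau> \<in> BD V E lam"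
          have ft: "finite \<tau>" using finite_subset[OF _ fE] t by (simp add: BD_def)
          have "\<tau> - {eu} \<in> BD V (E-{eu}) lam"
            unfolding BD_def
          proof (intro CollectI conjI ballI)
            show "\<tau> - {eu} \<subseteq> E - {eu}" using t by (auto simp: BD_def)
            fix v assume v: "v \<in> V"
            have "card {f\<in>\<tau> - {eu}. v \<in> f} \<le> card {f\<in>\<tau>. v \<in> f}"
              by (rule card_filter_mono[OF ft]) blast
            also have "\<dots> \<le> lam v" using t v by (simp add: BD_def)
            finally show "card {f\<in>\<tau> - {eu}. v \<in> f} \<le> lam v" .
          qed
          then show "\<tau> \<in> cone (BD V (E-{eu}) lam) eu" by (simp add: cone_def)
        next
          fix \<tau> assume "\<tau> \<in> cone (BD V (E-{eu}) lam) eu"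
          then have t: "\<tau> - {eu} \<in> BD V (E-{eu}) lam" by (simp add: cone_def)
          have tE: "\<tau> \<subseteq> E" using t euE by (auto simp: BD_def)
          have ft: "finite \<tau>" using finite_subset[OF tE fE] .
          show "\<tau> \<in> BD V E lam"
            unfolding BD_def
          proof (intro CollectI conjI ballI)
            show "\<tau> \<subseteq> E" by fact
            fix v assume v: "v \<in> V"
            show "card {f\<in>\<tau>. v \<in> f} \<le> lam v"
            proof (cases "v = w")
              case True
              have "card {f\<in>\<tau>. v \<in> f} \<le> card A"
                by (rule card_mono[OF fA(1)]) (use tE True in \<open>auto simp: A_def\<close>)
              then show ?thesis using \<open>card A \<le> lam w\<close> True by simp
            next
              case vw: False
              show ?thesis
              proof (cases "v = u")
                case True
                have "{f\<in>\<tau>. v \<in> f} \<subseteq> {eu}" using tE True str(3) unfolding eu_def by blast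
                then have "card {f\<in>\<tau>. v \<in> f} \<le> card {eu}" by (intro card_mono) auto
                then show ?thesis using posu True by (simp add: eu_def)
              next
                case False
                then have "{f\<in>\<tau>. v \<in> f} = {f\<in>\<tau> - {eu}. v \<in> f}" using vw by (auto simp: eu_def)
                then show ?thesis using t v by (simp add: BD_def)
              qed
            qed
          qed
        qed
        have "\<forall>\<tau>\<in>BD V (E-{eu}) lam. eu \<notin> \<tau>" by (auto simp: BD_def)
        then have "vertex_decomposable (cone (BD V (E-{eu}) lam) eu)"
          by (rule cone_vd[OF IH[OF euE]])
        then show ?thesis using eq by simp
      next
        case notI: False
        show ?thesis
        proof (cases "lam w < card B")
          case True
          show ?thesis
          proof (rule shed[OF sg euE posu IH[OF euE] IH[OF euE]], intro allI impI)
            fix \<sigma> assume f: "facet \<sigma> (BD V (E-{eu}) lam)"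
            have sE: "\<sigma> \<subseteq> E" using f by (auto simp: facet_def BD_def)
            have fs: "finite \<sigma>" using finite_subset[OF sE fE] .
            have "lam w \<le> card {f\<in>\<sigma>. w \<in> f}"
            proof (rule ccontr)
              assume lt: "\<not> lam w \<le> card {f\<in>\<sigma>. w \<in> f}"
              have sub: "B - {eu} \<subseteq> {f\<in>\<sigma>. w \<in> f}"
              proof
                fix f assume fB: "f \<in> B - {eu}"
                then obtain y where y: "f = {w,y}" "y \<noteq> w" "\<forall>g\<in>E. y \<in> g \<longrightarrow> g = f"
                  using leafB by blast
                have fE2: "f \<in> E - {eu}" using fB by (auto simp: B_def A_def)
                have "lam y \<ge> 1" using pos fE2 y(1) by blast
                then have "f \<in> \<sigma>"
                  using leaf_in_facet[OF f _ fE fE2 y(1) y(2) y(3)] lt by auto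
                then show "f \<in> {f\<in>\<sigma>. w \<in> f}" using y(1) by simp
              qed
              have "card (B - {eu}) \<le> card {f\<in>\<sigma>. w \<in> f}"
                by (rule card_mono[OF _ sub]) (use fs in simp)
              moreover have "card B \<le> Suc (card (B - {eu}))"
              proof (cases "eu \<in> B")
                case True
                then show ?thesis using fA(2) by (simp add: card_Diff_singleton)
              next
                case False then show ?thesis by simp
              qed
              ultimately show False using lt True by linarith
            qed
            then show "\<exists>v\<in>eu. lam v \<le> card {f\<in>\<sigma>. v \<in> f}" by (auto simp: eu_def)
          qed
        next
          case False
          have wxE: "{w,x} \<in> E"
          proof (rule ccontr)
            assume "{w,x} \<notin> E"
            then have "B = A" by (auto simp: A_def B_def)
            then show False using notI False by simp
          qed
          have pos0: "\<forall>v\<in>{w,x}. lam v \<ge> 1" using pos wxE by blast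
          show ?thesis
          proof (rule shed[OF sg wxE pos0 IH[OF wxE] IH[OF wxE]], intro allI impI)
            fix \<sigma> assume f: "facet \<sigma> (BD V (E-{{w,x}}) lam)"
            have sE: "\<sigma> \<subseteq> E" using f by (auto simp: facet_def BD_def)
            have fs: "finite \<sigma>" using finite_subset[OF sE fE] .
            have "lam w \<le> card {f\<in>\<sigma>. w \<in> f}"
            proof (rule ccontr)
              assume lt: "\<not> lam w \<le> card {f\<in>\<sigma>. w \<in> f}"
              have sub: "B \<subseteq> {f\<in>\<sigma>. w \<in> f}"
              proof
                fix f assume fB: "f \<in> B"
                then obtain y where y: "f = {w,y}" "y \<noteq> w" "\<forall>g\<in>E. y \<in> g \<longrightarrow> g = f"
                  using leafB by blast
                have fE2: "f \<in> E - {{w,x}}" using fB by (auto simp: B_def A_def)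
                have "lam y \<ge> 1" using pos fE2 y(1) by blast
                then have "f \<in> \<sigma>"
                  using leaf_in_facet[OF f _ fE fE2 y(1) y(2) y(3)] lt by auto
                then show "f \<in> {f\<in>\<sigma>. w \<in> f}" using y(1) by simp
              qed
              have "card B \<le> card {f\<in>\<sigma>. w \<in> f}"
                by (rule card_mono[OF _ sub]) (use fs in simp)
              moreover have "card A \<le> Suc (card B)"
              proof -
                have "A \<subseteq> insert {w,x} B" by (auto simp: B_def)
                then have "card A \<le> card (insert {w,x} B)" using fA by (intro card_mono) auto
                also have "\<dots> \<le> Suc (card B)" using fA(2) by (simp add: card_insert_if)
                finally show ?thesis .
              qed
              ultimately show False using lt notI by linarith
            qed
            then show "\<exists>v\<in>{w,x}. lam v \<le> card {f\<in>\<sigma>. v \<in> f}" by auto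
          qed
        qed
      qed
    qed
  qed
qed



theorem theorem3p1:
  fixes V :: "'a set" and E :: "'a set set" and lam :: "'a \<Rightarrow> nat"
  assumes "forest V E"
  shows "vertex_decomposable (BD V E lam)"
  using assms by (rule main)

end
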